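(* Let $(S,K,I)$ be a split graph. If $\Phi(S)$ is disconnected, then $S$ is decomposable.
   Context: All graphs are finite and simple. A split graph is a graph $S$ whose vertex set is a disjoint union $V(S)=K\,\dot\cup\,I$ with $K$ a clique and $I$ an independent set; $(K,I)$ is called a bipartition of $S$, and $(S,K,I)$ denotes $S$ together with this fixed bipartition. For a split graph $(S,K,I)$ and distinct $u,v\in I$, $\sigma_{uv}(S)$ is the number of induced subgraphs of $S$ isomorphic to $P_4$ containing both $u$ and $v$. The factor graph $\Phi(S)$ is the loopless multigraph with vertex set $I$ having exactly $\sigma_{uv}(S)$ parallel edges between $u$ and $v$. Graph notions (connected, complete, clique, etc.) applied to $\Phi(S)$ refer to its underlying simple graph, in which $u\sim v$ iff $\sigma_{uv}(S)\ge1$. Tyshkevich composition: for a split graph $(S,K,I)$ and a graph $G$ vertex-disjoint from $S$, $S\circ G$ is the graph with vertex set $V(S)\cup V(G)$ and edge set $E(S)\cup E(G)\cup\{xy: x\in K,\ y\in V(G)\}$. A graph $G$ is decomposable if $G=S\circ H$ for some split graph $S$ and graph $H$, each with at least one vertex; otherwise $G$ is indecomposable. *)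

theory Defs
  imports Main
begin

definition graph :: "'a set \<Rightarrow> ('a \<Rightarrow> 'a \<Rightarrow> bool) \<Rightarrow> bool" where
  "graph V E \<longleftrightarrow> finite V \<and> (\<forall>x y. E x y \<longrightarrow> x \<in> V \<and> y \<in> V \<and> x \<noteq> y \<and> E y x)"

definition clique_in :: "('a \<Rightarrow> 'a \<Rightarrow> bool) \<Rightarrow> 'a set \<Rightarrow> bool" where
  "clique_in E K \<longleftrightarrow> (\<forall>x\<in>K. \<forall>y\<in>K. x \<noteq> y \<longrightarrow> E x y)"

definition independent_in :: "('a \<Rightarrow> 'a \<Rightarrow> bool) \<Rightarrow> 'a set \<Rightarrow> bool" where
  "independent_in E I \<longleftrightarrow> (\<forall>x\<in>I. \<forall>y\<in>I. \<not> E x y)"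

definition split_graph :: "'a set \<Rightarrow> ('a \<Rightarrow> 'a \<Rightarrow> bool) \<Rightarrow> 'a set \<Rightarrow> 'a set \<Rightarrow> bool" where
  "split_graph V E K I \<longleftrightarrow> graph V E \<and> V = K \<union> I \<and> K \<inter> I = {} \<and>
     clique_in E K \<and> independent_in E I"

definition induced_P4 :: "'a set \<Rightarrow> ('a \<Rightarrow> 'a \<Rightarrow> bool) \<Rightarrow> 'a set \<Rightarrow> bool" where
  "induced_P4 V E X \<longleftrightarrow> X \<subseteq> V \<and> (\<exists>a b c d. X = {a, b, c, d} \<and> distinct [a, b, c, d] \<and>
      E a b \<and> E b c \<and> E c d \<and> \<not> E a c \<and> \<not> E a d \<and> \<not> E b d)"

definition sigma :: "'a set \<Rightarrow> ('a \<Rightarrow> 'a \<Rightarrow> bool) \<Rightarrow> 'a \<Rightarrow> 'a \<Rightarrow> nat" where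
  "sigma V E u v = card {X. induced_P4 V E X \<and> u \<in> X \<and> v \<in> X}"

text \<open>Underlying simple graph of the factor graph Phi(S), on vertex set I.\<close>
definition factor_adj :: "'a set \<Rightarrow> ('a \<Rightarrow> 'a \<Rightarrow> bool) \<Rightarrow> 'a set \<Rightarrow> 'a \<Rightarrow> 'a \<Rightarrow> bool" where
  "factor_adj V E I u v \<longleftrightarrow> u \<in> I \<and> v \<in> I \<and> u \<noteq> v \<and> sigma V E u v \<ge> 1"

definition factor_disconnected :: "'a set \<Rightarrow> ('a \<Rightarrow> 'a \<Rightarrow> bool) \<Rightarrow> 'a set \<Rightarrow> bool" where
  "factor_disconnected V E I \<longleftrightarrow> (\<exists>u\<in>I. \<exists>v\<in>I. \<not> (factor_adj V E I)\<^sup>*\<^sup>* u v)"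

text \<open>Edge relation of the Tyshkevich composition S \<circ> G (S = (VS,ES) with clique part K).\<close>
definition tcomp_edges :: "('a \<Rightarrow> 'a \<Rightarrow> bool) \<Rightarrow> 'a set \<Rightarrow> 'a set \<Rightarrow> ('a \<Rightarrow> 'a \<Rightarrow> bool) \<Rightarrow> 'a \<Rightarrow> 'a \<Rightarrow> bool" where
  "tcomp_edges ES K VG EG x y \<longleftrightarrow>
     ES x y \<or> EG x y \<or> (x \<in> K \<and> y \<in> VG) \<or> (y \<in> K \<and> x \<in> VG)"

definition decomposable :: "'a set \<Rightarrow> ('a \<Rightarrow> 'a \<Rightarrow> bool) \<Rightarrow> bool" where
  "decomposable V E \<longleftrightarrow> (\<exists>VS ES K I VH EH.
      split_graph VS ES K I \<and> graph VH EH \<and> VS \<noteq> {} \<and> VH \<noteq> {} \<and> VS \<inter> VH = {} \<and>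
      V = VS \<union> VH \<and> E = tcomp_edges ES K VH EH)"

end

theory Submission
  imports Defs
begin

lemma decomp_crit:
  assumes sg: "split_graph V E K I" and k1: "K1 \<subseteq> K" and i1: "I1 \<subseteq> I"
    and h1: "\<forall>x\<in>I1. \<forall>k. E x k \<longrightarrow> k \<in> K1"
    and h2: "\<forall>y\<in>I - I1. \<forall>k\<in>K1. E y k"
    and ne1: "K1 \<union> I1 \<noteq> {}" and ne2: "V - (K1 \<union> I1) \<noteq> {}"
  shows "decomposable V E"
proof -
  let ?VS = "K1 \<union> I1" and ?VH = "V - (K1 \<union> I1)"
  define ES where "ES = (\<lambda>x y. E x y \<and> x \<in> ?VS \<and> y \<in> ?VS)"
  define EH where "EH = (\<lambda>x y. E x y \<and> x \<in> ?VH \<and> y \<in> ?VH)"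
  have g: "finite V" "\<And>x y. E x y \<Longrightarrow> x \<in> V \<and> y \<in> V \<and> x \<noteq> y \<and> E y x"
    and V: "V = K \<union> I" and KI: "K \<inter> I = {}" and cl: "clique_in E K" and ind: "independent_in E I"
    using sg unfolding split_graph_def graph_def by auto
  have s1: "split_graph ?VS ES K1 I1"
  proof -
    have "finite ?VS" using g(1) V k1 i1 by (meson finite_Un finite_subset le_sup_iff order_refl)
    moreover have "\<forall>x y. ES x y \<longrightarrow> x \<in> ?VS \<and> y \<in> ?VS \<and> x \<noteq> y \<and> ES y x"
      unfolding ES_def using g(2) by blast
    moreover have "K1 \<inter> I1 = {}" using KI k1 i1 by blast
    moreover have "clique_in ES K1" unfolding clique_in_def ES_def using cl k1
      unfolding clique_in_def by blast
    moreover have "independent_in ES I1" unfolding independent_in_def ES_def using ind i1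
      unfolding independent_in_def by blast
    ultimately show ?thesis unfolding split_graph_def graph_def by blast
  qed
  have s2: "graph ?VH EH"
    unfolding graph_def EH_def using g by auto
  have e: "E = tcomp_edges ES K1 ?VH EH"
  proof (intro ext iffI)
    fix x y assume exy: "E x y"
    show "tcomp_edges ES K1 ?VH EH x y"
    proof (cases "x \<in> ?VS")
      case True
      show ?thesis
      proof (cases "y \<in> ?VS")
        case True with \<open>x \<in> ?VS\<close> exy show ?thesis unfolding tcomp_edges_def ES_def by auto
      next
        case False
        have yV: "y \<in> V" using g(2)[OF exy] by auto
        show ?thesis
        proof (cases "x \<in> K1")
          case True then show ?thesis using False yV unfolding tcomp_edges_def by auto
        next
          case xn: False
          then have "x \<in> I1" using \<open>x \<in> ?VS\<close> by auto
          then have "y \<in> K1" using h1 exy by auto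
          then show ?thesis using False by auto
        qed
      qed
    next
      case False
      have xV: "x \<in> V" and eyx: "E y x" using g(2)[OF exy] by auto
      show ?thesis
      proof (cases "y \<in> ?VS")
        case False with \<open>x \<notin> ?VS\<close> exy xV g(2)[OF exy] show ?thesis unfolding tcomp_edges_def EH_def by auto
      next
        case True
        show ?thesis
        proof (cases "y \<in> K1")
          case True then show ?thesis using \<open>x \<notin> ?VS\<close> xV unfolding tcomp_edges_def by auto
        next
          case yn: False
          then have "y \<in> I1" using True by auto
          then have "x \<in> K1" using h1 eyx by auto
          then show ?thesis using \<open>x \<notin> ?VS\<close> by auto
        qed
      qed
    qed
  next
    fix x y assume t: "tcomp_edges ES K1 ?VH EH x y"
    have side: "E a b" if a: "a \<in> K1" and b: "b \<in> ?VH" for a b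
    proof (cases "b \<in> K")
      case True
      then show ?thesis using cl a b k1 unfolding clique_in_def by auto
    next
      case False
      then have "b \<in> I - I1" using b V by auto
      then have "E b a" using h2 a by auto
      then show ?thesis using g(2) by blast
    qed
    show "E x y" using t side g(2) unfolding tcomp_edges_def ES_def EH_def by blast
  qed
  have sub: "V = ?VS \<union> ?VH" using k1 i1 V by blast
  show ?thesis unfolding decomposable_def
    apply (rule exI[of _ ?VS], rule exI[of _ ES], rule exI[of _ K1], rule exI[of _ I1],
           rule exI[of _ ?VH], rule exI[of _ EH])
    using s1 s2 ne1 ne2 e sub by (simp only: Int_Diff Diff_disjoint simp_thms)
qed

lemma incomp_adj:
  assumes sg: "split_graph V E K I" and ab: "a \<in> I" "b \<in> I" "a \<noteq> b"
    and c: "c \<in> K" "E a c" "\<not> E b c" and d: "d \<in> K" "E b d" "\<not> E a d"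
  shows "factor_adj V E I a b"
proof -
  have g: "finite V" "\<And>x y. E x y \<Longrightarrow> x \<in> V \<and> y \<in> V \<and> x \<noteq> y \<and> E y x"
    and V: "V = K \<union> I" and KI: "K \<inter> I = {}" and cl: "clique_in E K" and ind: "independent_in E I"
    using sg unfolding split_graph_def graph_def by auto
  have cd: "c \<noteq> d" using c d by auto
  have ecd: "E c d" using cl c d cd unfolding clique_in_def by blast
  have nab: "\<not> E a b" using ind ab unfolding independent_in_def by blast
  have ncb: "\<not> E c b" using c g(2) by blast
  have dist: "distinct [a, c, d, b]" using ab c d cd KI by auto
  have "induced_P4 V E {a, c, d, b}"
    unfolding induced_P4_def
    apply (rule conjI)
    using V ab c d apply blast
    apply (rule exI[of _ a], rule exI[of _ c], rule exI[of _ d], rule exI[of _ b])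
    using dist c d ecd nab ncb g(2) by blast
  then have mem: "{a, c, d, b} \<in> {X. induced_P4 V E X \<and> a \<in> X \<and> b \<in> X}" by simp
  have fin: "finite {X. induced_P4 V E X \<and> a \<in> X \<and> b \<in> X}"
    by (rule finite_subset[of _ "Pow V"]) (auto simp: induced_P4_def g(1))
  have "card {X. induced_P4 V E X \<and> a \<in> X \<and> b \<in> X} \<ge> 1"
    using fin mem by (metis One_nat_def Suc_leI card_gt_0_iff empty_iff)
  then show ?thesis unfolding factor_adj_def sigma_def using ab by blast
qed

theorem corollary2p5:
  fixes V K I :: "'a set" and E :: "'a \<Rightarrow> 'a \<Rightarrow> bool"
  assumes "split_graph V E K I"
    and "factor_disconnected V E I"
  shows "decomposable V E"
proof -
  note sg = assms(1)
  have g: "finite V" "\<And>x y. E x y \<Longrightarrow> x \<in> V \<and> y \<in> V \<and> x \<noteq> y \<and> E y x"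
    and V: "V = K \<union> I" and KI: "K \<inter> I = {}" and cl: "clique_in E K" and ind: "independent_in E I"
    using sg unfolding split_graph_def graph_def by auto
  obtain u v where u: "u \<in> I" and v: "v \<in> I" and nuv: "\<not> (factor_adj V E I)\<^sup>*\<^sup>* u v"
    using assms(2) unfolding factor_disconnected_def by blast
  define nb where "nb = (\<lambda>y. {k\<in>K. E y k})"
  define Q where "Q = (\<lambda>a b. a \<in> I \<and> b \<in> I \<and> a \<noteq> b \<and> \<not> nb a \<subseteq> nb b \<and> \<not> nb b \<subseteq> nb a)"
  have QR: "Q a b \<Longrightarrow> factor_adj V E I a b" for a b
  proof -
    assume q: "Q a b"
    then obtain c where "c \<in> K" "E a c" "\<not> E b c" unfolding Q_def nb_def by blast
    moreover obtain d where "d \<in> K" "E b d" "\<not> E a d" using q unfolding Q_def nb_def by blast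
    ultimately show ?thesis using incomp_adj[OF sg] q unfolding Q_def by blast
  qed
  have "Q\<^sup>*\<^sup>* \<le> (factor_adj V E I)\<^sup>*\<^sup>*" by (rule rtranclp_mono) (use QR in blast)
  then have nQ: "\<not> Q\<^sup>*\<^sup>* u v" using nuv by (metis predicate2D)
  define C where "C = {w. Q\<^sup>*\<^sup>* u w}"
  have uC: "u \<in> C" unfolding C_def by simp
  have vC: "v \<notin> C" unfolding C_def using nQ by simp
  have CI: "C \<subseteq> I"
  proof
    fix w assume "w \<in> C"
    then have "Q\<^sup>*\<^sup>* u w" unfolding C_def by simp
    then show "w \<in> I" by (induction rule: rtranclp_induct) (use u Q_def in auto)
  qed
  have comp: "nb w \<subseteq> nb x \<or> nb x \<subseteq> nb w" if x: "x \<in> I" "x \<notin> C" and w: "w \<in> C" for x w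
  proof -
    have "\<not> Q w x"
    proof
      assume "Q w x"
      then have "Q\<^sup>*\<^sup>* u x" using w unfolding C_def by (simp add: rtranclp.rtrancl_into_rtrancl)
      then show False using x unfolding C_def by simp
    qed
    moreover have "w \<noteq> x" using x w by auto
    ultimately show ?thesis using x w CI unfolding Q_def by blast
  qed
  have cons: "(\<forall>w\<in>C. nb x \<subseteq> nb w) \<or> (\<forall>w\<in>C. nb w \<subseteq> nb x)" if x: "x \<in> I" "x \<notin> C" for x
  proof -
    have inv: "Q\<^sup>*\<^sup>* u w \<Longrightarrow> (nb x \<subseteq> nb w \<longleftrightarrow> nb x \<subseteq> nb u)" for w
    proof (induction rule: rtranclp_induct)
      case base
      then show ?case by simp
    next
      case (step y z)
      have yC: "y \<in> C" and zC: "z \<in> C" using step unfolding C_def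
        by (auto simp add: rtranclp.rtrancl_into_rtrancl)
      have cy: "nb y \<subseteq> nb x \<or> nb x \<subseteq> nb y" using comp[OF x yC] .
      have cz: "nb z \<subseteq> nb x \<or> nb x \<subseteq> nb z" using comp[OF x zC] .
      have q: "\<not> nb y \<subseteq> nb z" "\<not> nb z \<subseteq> nb y" using step(2) unfolding Q_def by auto
      have "nb x \<subseteq> nb z \<longleftrightarrow> nb x \<subseteq> nb y" using cy cz q by blast
      then show ?case using step(3) by simp
    qed
    show ?thesis
    proof (cases "nb x \<subseteq> nb u")
      case True
      then show ?thesis using inv unfolding C_def by blast
    next
      case False
      then have "\<forall>w\<in>C. \<not> nb x \<subseteq> nb w" using inv unfolding C_def by blast
      then show ?thesis using comp[OF x] by blast
    qed
  qed
  have inK: "k \<in> K" if "x \<in> I" "E x k" for x k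
  proof -
    have "k \<in> V" using g(2)[OF that(2)] by blast
    moreover have "k \<notin> I" using ind that unfolding independent_in_def by blast
    ultimately show ?thesis using V by blast
  qed
  define B where "B = {x\<in>I. x \<notin> C \<and> \<not> (\<forall>w\<in>C. nb w \<subseteq> nb x)}"
  show ?thesis
  proof (cases "B = {}")
    case False
    define L where "L = {k\<in>K. \<forall>w\<in>C. E w k}"
    show ?thesis
    proof (rule decomp_crit[OF sg, of L B])
      show "L \<subseteq> K" unfolding L_def by blast
      show "B \<subseteq> I" unfolding B_def by blast
      show "\<forall>x\<in>B. \<forall>k. E x k \<longrightarrow> k \<in> L"
      proof (intro ballI allI impI)
        fix x k assume xB: "x \<in> B" and e: "E x k"
        have xI: "x \<in> I" "x \<notin> C" using xB unfolding B_def by auto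
        have k: "k \<in> K" using inK xI e by blast
        have "\<forall>w\<in>C. nb x \<subseteq> nb w" using cons[OF xI] xB unfolding B_def by blast
        then show "k \<in> L" using k e unfolding L_def nb_def by blast
      qed
      show "\<forall>y\<in>I - B. \<forall>k\<in>L. E y k"
      proof (intro ballI)
        fix y k assume y: "y \<in> I - B" and k: "k \<in> L"
        show "E y k"
        proof (cases "y \<in> C")
          case True then show ?thesis using k unfolding L_def by blast
        next
          case False
          then have "nb u \<subseteq> nb y" using y uC unfolding B_def by blast
          moreover have "k \<in> nb u" using k uC unfolding L_def nb_def by blast
          ultimately show ?thesis unfolding nb_def by blast
        qed
      qed
      show "L \<union> B \<noteq> {}" using False by blast
      have "u \<in> V - (L \<union> B)" using u uC V KI unfolding L_def B_def by blast
      then show "V - (L \<union> B) \<noteq> {}" by blast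
    qed
  next
    case True
    define U where "U = {k\<in>K. \<exists>w\<in>C. E w k}"
    show ?thesis
    proof (rule decomp_crit[OF sg, of U C])
      show "U \<subseteq> K" unfolding U_def by blast
      show "C \<subseteq> I" by (rule CI)
      show "\<forall>x\<in>C. \<forall>k. E x k \<longrightarrow> k \<in> U"
        using inK CI unfolding U_def by blast
      show "\<forall>y\<in>I - C. \<forall>k\<in>U. E y k"
      proof (intro ballI)
        fix y k assume y: "y \<in> I - C" and k: "k \<in> U"
        then have all: "\<forall>w\<in>C. nb w \<subseteq> nb y" using True unfolding B_def by blast
        obtain w where "w \<in> C" "E w k" "k \<in> K" using k unfolding U_def by blast
        then show "E y k" using all unfolding nb_def by blast
      qed
      show "U \<union> C \<noteq> {}" using uC by blast
      have "v \<in> V - (U \<union> C)" using v vC V KI unfolding U_def by blast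
      then show "V - (U \<union> C) \<noteq> {}" by blast
    qed
  qed
qed

end
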